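(* Let $w\in G(e,e,n)$ and for $1\le i\le n$ let $c_i$ be the column with $a_i:=w[i,c_i]\neq 0$. (1) Let $n\ge 3$ and $3\le i\le n$. (a) If $c_{i-1}<c_i$, then $\ell(s_iw)=\ell(w)-1$ if and only if $a_i\neq 1$. (b) If $c_{i-1}>c_i$, then $\ell(s_iw)=\ell(w)-1$ if and only if $a_{i-1}=1$. (2) If $c_1<c_2$, then for every $0\le k\le e-1$: $\ell(t_kw)=\ell(w)-1$ if and only if $a_2\neq 1$. (3) If $c_1>c_2$, then for every $0\le k\le e-1$: $\ell(t_kw)=\ell(w)-1$ if and only if $a_1=\zeta_e^{-k}$.
   Context: Let $e\ge 2$, $n\ge 2$, $\zeta_e=e^{2\pi i/e}$. $G(e,e,n)$ is the group of $n\times n$ monomial matrices with nonzero entries $e$-th roots of unity whose product is $1$; $w[i,c]$ is the $(i,c)$ entry. For $i\in\mathbb{Z}/e\mathbb{Z}$, $t_i$ is the matrix with $(1,2)$ entry $\zeta_e^{-i}$, $(2,1)$ entry $\zeta_e^{i}$, $(j,j)$ entry $1$ for $3\le j\le n$, other entries $0$; for $3\le j\le n$, $s_j$ is the permutation matrix of the transposition $(j-1\ j)$. $X=\{t_0,\dots,t_{e-1},s_3,\dots,s_n\}$ and $\ell$ is the word length with respect to $X$. *)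

theory Defs
  imports Complex_Main "HOL-Combinatorics.Permutations"
begin

text \<open>Matrices of size n are represented as functions nat \<Rightarrow> nat \<Rightarrow> complex,
  indexed by {1..n}, and zero outside {1..n} x {1..n}.\<close>

type_synonym cmat = "nat \<Rightarrow> nat \<Rightarrow> complex"

definition zeta :: "nat \<Rightarrow> complex" where
  "zeta e = cis (2 * pi / real e)"

definition mmult :: "nat \<Rightarrow> cmat \<Rightarrow> cmat \<Rightarrow> cmat" where
  "mmult n A B = (\<lambda>i j. if i \<in> {1..n} \<and> j \<in> {1..n}
                         then (\<Sum>k\<in>{1..n}. A i k * B k j) else 0)"

definition idmat :: "nat \<Rightarrow> cmat" where
  "idmat n = (\<lambda>i j. if i \<in> {1..n} \<and> i = j then 1 else 0)"

definition Geen :: "nat \<Rightarrow> nat \<Rightarrow> cmat set" where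
  "Geen e n = {M. \<exists>\<sigma> a. \<sigma> permutes {1..n} \<and>
       (\<forall>i\<in>{1..n}. a i ^ e = 1) \<and> (\<Prod>i\<in>{1..n}. a i) = 1 \<and>
       (\<forall>i j. M i j = (if i \<in> {1..n} \<and> j = \<sigma> i then a i else 0))}"

definition tgen :: "nat \<Rightarrow> nat \<Rightarrow> nat \<Rightarrow> cmat" where
  "tgen e n k = (\<lambda>i j.
      if i = 1 \<and> j = 2 then inverse (zeta e ^ k)
      else if i = 2 \<and> j = 1 then zeta e ^ k
      else if 3 \<le> i \<and> i \<le> n \<and> i = j then 1 else 0)"

definition sgen :: "nat \<Rightarrow> nat \<Rightarrow> cmat" where
  "sgen n j = (\<lambda>a b. if a \<in> {1..n} \<and>
      b = (if a = j - 1 then j else if a = j then j - 1 else a) then 1 else 0)"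

definition gens :: "nat \<Rightarrow> nat \<Rightarrow> cmat set" where
  "gens e n = {tgen e n k | k. k < e} \<union> {sgen n j | j. 3 \<le> j \<and> j \<le> n}"

definition wprod :: "nat \<Rightarrow> cmat list \<Rightarrow> cmat" where
  "wprod n ws = foldr (mmult n) ws (idmat n)"

definition wlen :: "nat \<Rightarrow> nat \<Rightarrow> cmat \<Rightarrow> nat" where
  "wlen e n w = (LEAST m. \<exists>ws. length ws = m \<and> set ws \<subseteq> gens e n \<and> wprod n ws = w)"

end

theory Submission
  imports Defs
begin


definition mat :: "nat \<Rightarrow> (nat \<Rightarrow> nat) \<Rightarrow> (nat \<Rightarrow> complex) \<Rightarrow> cmat" where
  "mat n \<sigma> a = (\<lambda>i j. if i \<in> {1..n} \<and> j = \<sigma> i then a i else 0)"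

definition good :: "nat \<Rightarrow> nat \<Rightarrow> (nat \<Rightarrow> nat) \<Rightarrow> (nat \<Rightarrow> complex) \<Rightarrow> bool" where
  "good e n \<sigma> a \<longleftrightarrow> \<sigma> permutes {1..n} \<and> (\<forall>i\<in>{1..n}. a i ^ e = 1) \<and> (\<Prod>i\<in>{1..n}. a i) = 1"

lemma Geen_eq: "w \<in> Geen e n \<Longrightarrow> \<exists>\<sigma> a. w = mat n \<sigma> a \<and> good e n \<sigma> a"
proof -
  assume "w \<in> Geen e n"
  then obtain \<sigma> a where "\<sigma> permutes {1..n}" "\<forall>i\<in>{1..n}. a i ^ e = 1" "(\<Prod>i\<in>{1..n}. a i) = 1"
    "\<forall>i j. w i j = (if i \<in> {1..n} \<and> j = \<sigma> i then a i else 0)"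
    unfolding Geen_def by blast
  then show ?thesis unfolding good_def mat_def by (intro exI[of _ \<sigma>] exI[of _ a]) (auto simp: fun_eq_iff)
qed

lemma mmult_mat:
  assumes "\<forall>i\<in>{1..n}. \<tau> i \<in> {1..n}" "\<forall>i\<in>{1..n}. \<sigma> i \<in> {1..n}"
  shows "mmult n (mat n \<tau> d) (mat n \<sigma> a) = mat n (\<sigma> \<circ> \<tau>) (\<lambda>i. d i * a (\<tau> i))"
proof (rule ext, rule ext)
  fix i j
  show "mmult n (mat n \<tau> d) (mat n \<sigma> a) i j = mat n (\<sigma> \<circ> \<tau>) (\<lambda>i. d i * a (\<tau> i)) i j"
  proof (cases "i \<in> {1..n} \<and> j \<in> {1..n}")
    case True
    have "(\<Sum>k\<in>{1..n}. mat n \<tau> d i k * mat n \<sigma> a k j)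
        = (\<Sum>k\<in>{1..n}. if k = \<tau> i then d i * (if j = \<sigma> k then a k else 0) else 0)"
      using True by (intro sum.cong) (auto simp: mat_def)
    also have "\<dots> = d i * (if j = \<sigma> (\<tau> i) then a (\<tau> i) else 0)"
      using assms True by simp
    finally show ?thesis using True by (simp add: mmult_def mat_def)
  next
    case False
    then show ?thesis using assms by (auto simp: mmult_def mat_def)
  qed
qed

lemma sgen_mat: "sgen n j = mat n (transpose (j-1) j) (\<lambda>_. 1)"
  by (simp add: sgen_def mat_def transpose_def fun_eq_iff)

definition td :: "nat \<Rightarrow> nat \<Rightarrow> nat \<Rightarrow> complex" where
  "td e k i = (if i = 1 then inverse (zeta e ^ k) else if i = 2 then zeta e ^ k else 1)"

lemma tgen_mat: "2 \<le> n \<Longrightarrow> tgen e n k = mat n (transpose 1 2) (td e k)"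
  by (auto simp: tgen_def mat_def td_def transpose_def fun_eq_iff)

lemma idmat_mat: "idmat n = mat n id (\<lambda>_. 1)"
  by (auto simp: idmat_def mat_def fun_eq_iff)

lemma zeta_nz[simp]: "zeta e \<noteq> 0" by (simp add: zeta_def)

lemma zeta_pow: "e > 0 \<Longrightarrow> zeta e ^ e = 1"
  by (simp add: zeta_def DeMoivre complex_eq_iff)

lemma zeta_pow2: "e > 0 \<Longrightarrow> (zeta e ^ k) ^ e = 1"
  by (metis power_mult mult.commute power_one zeta_pow)

lemma root_ex:
  assumes "e > 0" "x ^ e = (1::complex)"
  shows "\<exists>k<e. x = inverse (zeta e ^ k)"
proof -
  have "inverse x ^ e = 1" using assms by (simp add: power_inverse)
  then have "inverse x \<in> (\<lambda>k. cis (2 * pi * real k / real e)) ` {..<e}"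
    using bij_betw_roots_unity[OF assms(1)] unfolding bij_betw_def by auto
  then obtain k where k: "k < e" "inverse x = cis (2 * pi * real k / real e)" by auto
  have "zeta e ^ k = cis (2 * pi * real k / real e)"
    by (simp add: zeta_def DeMoivre mult_ac)
  with k show ?thesis by (metis inverse_inverse_eq)
qed

lemma card_transp:
  assumes "finite S" "p \<in> S \<longleftrightarrow> q \<in> S"
  shows "card {j\<in>S. P (transpose p q j)} = card {j\<in>S. P j}"
proof -
  have im: "transpose p q ` S = S" using assms(2) by simp
  have "{j\<in>S. P (transpose p q j)} = transpose p q ` {j\<in>S. P j}"
  proof safe
    fix x assume "x \<in> S" "P (transpose p q x)"
    then show "x \<in> transpose p q ` {j\<in>S. P j}"
      using im by (intro image_eqI[of _ _ "transpose p q x"]) auto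
  next
    fix x assume "x \<in> S" "P x" then show "transpose p q x \<in> S" using im by blast
  qed auto
  then show ?thesis by (simp add: card_image)
qed

lemma card_ins:
  assumes "finite S" "x \<notin> S"
  shows "card {j\<in>insert x S. P j} = card {j\<in>S. P j} + (if P x then 1 else 0)"
proof (cases "P x")
  case True
  then have "{j\<in>insert x S. P j} = insert x {j\<in>S. P j}" by auto
  then show ?thesis using assms True by simp
next
  case False
  then have "{j\<in>insert x S. P j} = {j\<in>S. P j}" by auto
  then show ?thesis using False by simp
qed



definition T :: "nat \<Rightarrow> (nat \<Rightarrow> nat) \<Rightarrow> (nat \<Rightarrow> complex) \<Rightarrow> nat \<Rightarrow> int" where
  "T n \<sigma> a r = (if a r = 1 then int (card {j\<in>{r<..n}. \<sigma> j < \<sigma> r})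
     else int (\<sigma> r) - 1 + int (card {j\<in>{1..<r}. \<sigma> j < \<sigma> r}))"

definition F :: "nat \<Rightarrow> (nat \<Rightarrow> nat) \<Rightarrow> (nat \<Rightarrow> complex) \<Rightarrow> int" where
  "F n \<sigma> a = (\<Sum>r\<in>{1..n}. T n \<sigma> a r)"

lemma sum_split2:
  assumes "p \<in> S" "q \<in> S" "p \<noteq> q" "finite S"
  shows "sum f S = f p + f q + sum f (S - {p} - {q})"
  using assms by (simp add: sum.remove[of S p] sum.remove[of "S - {p}" q] add.assoc)

lemma T_rest:
  assumes "p \<in> {r<..n} \<longleftrightarrow> q \<in> {r<..n}" "p \<in> {1..<r} \<longleftrightarrow> q \<in> {1..<r}" "r\<noteq>p" "r\<noteq>q" "a' r = a r"
  shows "T n (\<sigma> \<circ> transpose p q) a' r = T n \<sigma> a r"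
proof -
  have "card {j\<in>{r<..n}. \<sigma> (transpose p q j) < \<sigma> r} = card {j\<in>{r<..n}. \<sigma> j < \<sigma> r}"
    by (rule card_transp[of _ p q "\<lambda>j. \<sigma> j < \<sigma> r"]) (use assms in auto)
  moreover have "card {j\<in>{1..<r}. \<sigma> (transpose p q j) < \<sigma> r} = card {j\<in>{1..<r}. \<sigma> j < \<sigma> r}"
    by (rule card_transp[of _ p q "\<lambda>j. \<sigma> j < \<sigma> r"]) (use assms in auto)
  moreover have "transpose p q r = r" using assms by simp
  ultimately show ?thesis using assms unfolding T_def by simp
qed

lemma D1:
  assumes i: "3 \<le> i" "i \<le> n" and lt: "\<sigma> (i-1) < \<sigma> i"
  shows "F n (\<sigma> \<circ> transpose (i-1) i) (\<lambda>j. a (transpose (i-1) i j)) = F n \<sigma> a + (if a i = 1 then 1 else -1)"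
proof -
  let ?s = "\<sigma> \<circ> transpose (i-1) i" and ?a = "\<lambda>j. a (transpose (i-1) i j)"
  let ?R = "{1..n} - {i-1} - {i}"
  have sp: "sum f {1..n} = f (i-1) + f i + sum f ?R" for f
    using i by (intro sum_split2) auto
  have rest: "sum (T n ?s ?a) ?R = sum (T n \<sigma> a) ?R"
    using i by (intro sum.cong refl T_rest) auto
  define U where "U v = card {j\<in>{i<..n}. \<sigma> j < v}" for v
  define L where "L v = card {j\<in>{1..<i-1}. \<sigma> j < v}" for v
  have U': "card {j\<in>{i<..n}. ?s j < v} = U v" for v
    unfolding U_def by (intro arg_cong[where f=card]) auto
  have L': "card {j\<in>{1..<i-1}. ?s j < v} = L v" for v
    unfolding L_def by (intro arg_cong[where f=card]) auto
  have up: "{i-1<..n} = insert i {i<..n}" using i by auto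
  have lo: "{1..<i} = insert (i-1) {1..<i-1}" using i by auto
  have ci: "card {j\<in>{i-1<..n}. g j < v} = card {j\<in>{i<..n}. g j < v} + (if g i < v then 1 else 0)" for g v
    unfolding up by (rule card_ins) auto
  have cl: "card {j\<in>{1..<i}. g j < v} = card {j\<in>{1..<i-1}. g j < v} + (if g (i-1) < v then 1 else 0)" for g v
    unfolding lo by (rule card_ins) auto
  have s1: "?s (i-1) = \<sigma> i" "?s i = \<sigma> (i-1)" "?a (i-1) = a i" "?a i = a (i-1)" by auto
  have o1: "T n \<sigma> a (i-1) = (if a (i-1) = 1 then int (U (\<sigma> (i-1))) else int (\<sigma> (i-1)) - 1 + int (L (\<sigma> (i-1))))"
    unfolding T_def using lt ci[of \<sigma> "\<sigma> (i-1)"] by (simp add: U_def L_def)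
  have o2: "T n \<sigma> a i = (if a i = 1 then int (U (\<sigma> i)) else int (\<sigma> i) + int (L (\<sigma> i)))"
    unfolding T_def using lt cl[of \<sigma> "\<sigma> i"] by (simp add: U_def L_def)
  have n1: "T n ?s ?a (i-1) = (if a i = 1 then int (U (\<sigma> i)) + 1 else int (\<sigma> i) - 1 + int (L (\<sigma> i)))"
    unfolding T_def using lt ci[of ?s "\<sigma> i"] U'[of "\<sigma> i"] L'[of "\<sigma> i"] by (simp only: s1) simp
  have n2: "T n ?s ?a i = (if a (i-1) = 1 then int (U (\<sigma> (i-1))) else int (\<sigma> (i-1)) - 1 + int (L (\<sigma> (i-1))))"
    unfolding T_def using lt cl[of ?s "\<sigma> (i-1)"] U'[of "\<sigma> (i-1)"] L'[of "\<sigma> (i-1)"] by (simp only: s1) simp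
  show ?thesis unfolding F_def sp[of "T n ?s ?a"] sp[of "T n \<sigma> a"] rest o1 o2 n1 n2 by simp
qed



lemma count_perm:
  assumes "\<sigma> permutes {1..n}" "v \<in> {1..n}"
  shows "card {j\<in>{1..n}. \<sigma> j < v} = v - 1"
proof -
  have "\<sigma> ` {j\<in>{1..n}. \<sigma> j < v} = {y\<in>\<sigma> ` {1..n}. y < v}" by auto
  also have "\<dots> = {1..<v}" using assms permutes_image[OF assms(1)] by auto
  finally have "card (\<sigma> ` {j\<in>{1..n}. \<sigma> j < v}) = v - 1" by simp
  moreover have "inj_on \<sigma> {j\<in>{1..n}. \<sigma> j < v}"
    using permutes_inj_on[OF assms(1)] by (auto intro: inj_on_subset)
  ultimately show ?thesis by (simp add: card_image)
qed

lemma D2: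
  assumes \<sigma>: "\<sigma> permutes {1..n}" and n: "2 \<le> n" and lt: "\<sigma> 1 < \<sigma> 2"
  shows "F n (\<sigma> \<circ> transpose 1 2) (\<lambda>j. td e k j * a (transpose 1 2 j)) = F n \<sigma> a + (if a 2 = 1 then 1 else -1)"
proof -
  let ?s = "\<sigma> \<circ> transpose 1 2" and ?a = "\<lambda>j. td e k j * a (transpose 1 2 j)"
  let ?R = "{1..n} - {1} - {2}"
  have sp: "sum f {1..n} = f 1 + f 2 + sum f ?R" for f
    using n by (intro sum_split2) auto
  have rest: "sum (T n ?s ?a) ?R = sum (T n \<sigma> a) ?R"
    using n by (intro sum.cong refl T_rest) (auto simp: td_def)
  define U where "U v = card {j\<in>{2<..n}. \<sigma> j < v}" for v
  have U': "card {j\<in>{2<..n}. ?s j < v} = U v" for v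
    unfolding U_def by (intro arg_cong[where f=card]) auto
  have up: "{1<..n} = insert 2 {2<..n}" using n by auto
  have all: "{1..n} = insert 1 (insert 2 {2<..n})" using n by auto
  have ci: "card {j\<in>{1<..n}. g j < v} = card {j\<in>{2<..n}. g j < v} + (if g 2 < v then 1 else 0)" for g v
    unfolding up by (rule card_ins) auto
  have ca: "card {j\<in>{1..n}. g j < v} = card {j\<in>{2<..n}. g j < v} + (if g 2 < v then 1 else 0)
        + (if g 1 < v then 1 else 0)" for g v
  proof -
    have "card {j\<in>insert 1 (insert 2 {2<..n}). g j < v} = card {j\<in>insert 2 {2<..n}. g j < v} + (if g 1 < v then 1 else 0)"
      by (rule card_ins) auto
    moreover have "card {j\<in>insert 2 {2<..n}. g j < v} = card {j\<in>{2<..n}. g j < v} + (if g 2 < v then 1 else 0)"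
      by (rule card_ins) auto
    ultimately show ?thesis unfolding all by simp
  qed
  have r1: "\<sigma> 1 \<in> {1..n}" "\<sigma> 2 \<in> {1..n}" using permutes_in_image[OF \<sigma>] n by auto
  have Up: "int (U (\<sigma> 1)) = int (\<sigma> 1) - 1"
    using ca[of \<sigma> "\<sigma> 1"] count_perm[OF \<sigma> r1(1)] lt r1 by (simp add: U_def)
  have Uq: "int (U (\<sigma> 2)) = int (\<sigma> 2) - 2"
    using ca[of \<sigma> "\<sigma> 2"] count_perm[OF \<sigma> r1(2)] lt r1 by (simp add: U_def)
  have s1: "?s 1 = \<sigma> 2" "?s 2 = \<sigma> 1" by auto
  have l1: "{1..<(1::nat)} = {}" "{1..<(2::nat)} = {1}" by auto
  have o1: "T n \<sigma> a 1 = int (\<sigma> 1) - 1"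
    unfolding T_def using lt ci[of \<sigma> "\<sigma> 1"] Up by (simp add: U_def l1)
  have o2: "T n \<sigma> a 2 = (if a 2 = 1 then int (\<sigma> 2) - 2 else int (\<sigma> 2))"
  proof -
    have "{j\<in>{1..<2::nat}. \<sigma> j < \<sigma> 2} = {1}" using lt by auto
    then show ?thesis unfolding T_def using lt Uq by (simp add: U_def)
  qed
  have n1: "T n ?s ?a 1 = int (\<sigma> 2) - 1"
    unfolding T_def using lt ci[of ?s "\<sigma> 2"] U'[of "\<sigma> 2"] Uq by (simp only: s1 l1) simp
  have n2: "T n ?s ?a 2 = int (\<sigma> 1) - 1"
    unfolding T_def using lt U'[of "\<sigma> 1"] Up by (simp only: s1 l1) simp
  show ?thesis unfolding F_def sp[of "T n ?s ?a"] sp[of "T n \<sigma> a"] rest o1 o2 n1 n2 by simp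
qed



definition sS :: "nat \<Rightarrow> (nat \<Rightarrow> nat) \<Rightarrow> nat \<Rightarrow> nat" where "sS i \<sigma> = \<sigma> \<circ> transpose (i-1) i"
definition sA :: "nat \<Rightarrow> (nat \<Rightarrow> complex) \<Rightarrow> nat \<Rightarrow> complex" where "sA i a = (\<lambda>j. a (transpose (i-1) i j))"
definition tS :: "(nat \<Rightarrow> nat) \<Rightarrow> nat \<Rightarrow> nat" where "tS \<sigma> = \<sigma> \<circ> transpose 1 2"
definition tA :: "nat \<Rightarrow> nat \<Rightarrow> (nat \<Rightarrow> complex) \<Rightarrow> nat \<Rightarrow> complex" where
  "tA e k a = (\<lambda>j. td e k j * a (transpose 1 2 j))"

lemma sS_inv[simp]: "sS i (sS i \<sigma>) = \<sigma>" by (simp add: sS_def fun_eq_iff)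
lemma sA_inv[simp]: "sA i (sA i a) = a" by (simp add: sA_def)
lemma tS_inv[simp]: "tS (tS \<sigma>) = \<sigma>" by (simp add: tS_def fun_eq_iff)
lemma tA_inv[simp]: "tA e k (tA e k a) = a"
  by (auto simp: tA_def td_def fun_eq_iff transpose_def)

lemma perm_range: assumes "\<sigma> permutes {1..n}" shows "\<forall>i\<in>{1..n}. \<sigma> i \<in> {1..n}"
proof
  fix i assume "i \<in> {1..n}"
  then show "\<sigma> i \<in> {1..n}" by (rule iffD2[OF permutes_in_image[OF assms]])
qed

lemma s_mult:
  assumes "3 \<le> i" "i \<le> n" "\<sigma> permutes {1..n}"
  shows "mmult n (sgen n i) (mat n \<sigma> a) = mat n (sS i \<sigma>) (sA i a)"
proof -
  have p: "transpose (i-1) i permutes {1..n}" using assms by (intro permutes_swap_id) auto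
  show ?thesis unfolding sgen_mat sS_def sA_def
    using mmult_mat[OF perm_range[OF p] perm_range[OF assms(3)], of "\<lambda>_. 1" a] by (simp only: mult_1_left)
qed

lemma t_mult:
  assumes "2 \<le> n" "\<sigma> permutes {1..n}"
  shows "mmult n (tgen e n k) (mat n \<sigma> a) = mat n (tS \<sigma>) (tA e k a)"
proof -
  have p: "transpose 1 2 permutes {1..n}" using assms by (intro permutes_swap_id) auto
  show ?thesis unfolding tgen_mat[OF assms(1)] tS_def tA_def
    using mmult_mat[OF perm_range[OF p] perm_range[OF assms(2)], of "td e k" a] .
qed

lemma s_good:
  assumes "3 \<le> i" "i \<le> n" "good e n \<sigma> a"
  shows "good e n (sS i \<sigma>) (sA i a)"
proof -
  have p: "transpose (i-1) i permutes {1..n}" using assms by (intro permutes_swap_id) auto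
  have "(\<Prod>j\<in>{1..n}. a (transpose (i-1) i j)) = (\<Prod>j\<in>{1..n}. a j)"
    using prod.permute[OF p, of a] by (simp add: comp_def)
  moreover have "\<sigma> \<circ> transpose (i-1) i permutes {1..n}"
    using assms(3) p unfolding good_def by (intro permutes_compose) auto
  moreover have "\<forall>j\<in>{1..n}. a (transpose (i-1) i j) ^ e = 1"
    using assms(3) perm_range[OF p] unfolding good_def by blast
  ultimately show ?thesis using assms(3) unfolding good_def sS_def sA_def by simp
qed

lemma td_prod: "2 \<le> n \<Longrightarrow> (\<Prod>j\<in>{1..n}. td e k j) = 1"
proof -
  assume n: "2 \<le> n"
  have all: "{1..n} = insert 1 (insert 2 {3..n})" using n by auto
  have "(\<Prod>j\<in>{3..n}. td e k j) = 1" by (intro prod.neutral) (auto simp: td_def)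
  then show ?thesis unfolding all by (simp add: td_def)
qed

lemma t_good:
  assumes "2 \<le> n" "good e n \<sigma> a" "e > 0"
  shows "good e n (tS \<sigma>) (tA e k a)"
proof -
  have p: "transpose 1 2 permutes {1..n}" using assms by (intro permutes_swap_id) auto
  have "(\<Prod>j\<in>{1..n}. a (transpose 1 2 j)) = (\<Prod>j\<in>{1..n}. a j)"
    using prod.permute[OF p, of a] by (simp add: comp_def)
  moreover have "(\<Prod>j\<in>{1..n}. td e k j * a (transpose 1 2 j)) = (\<Prod>j\<in>{1..n}. td e k j) * (\<Prod>j\<in>{1..n}. a (transpose 1 2 j))"
    by (rule prod.distrib)
  moreover have "td e k j ^ e = 1" for j
    using zeta_pow2[OF assms(3), of k] by (simp add: td_def power_inverse)
  moreover have "\<sigma> \<circ> transpose 1 2 permutes {1..n}"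
    using assms(2) p unfolding good_def by (intro permutes_compose) auto
  moreover have "\<forall>j\<in>{1..n}. a (transpose 1 2 j) ^ e = 1"
    using assms(2) perm_range[OF p] unfolding good_def by blast
  ultimately have "(\<forall>j\<in>{1..n}. (td e k j * a (transpose 1 2 j)) ^ e = 1)"
    and "(\<Prod>j\<in>{1..n}. td e k j * a (transpose 1 2 j)) = 1"
    and "\<sigma> \<circ> transpose 1 2 permutes {1..n}"
    using assms(2) td_prod[OF assms(1), of e k] unfolding good_def by (simp_all add: power_mult_distrib)
  then show ?thesis unfolding good_def tS_def tA_def by blast
qed

lemma s_F:
  assumes "3 \<le> i" "i \<le> n" "\<sigma> permutes {1..n}"
  shows "F n (sS i \<sigma>) (sA i a) = F n \<sigma> a + (if \<sigma> (i-1) < \<sigma> i then (if a i = 1 then 1 else -1)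
           else (if a (i-1) = 1 then -1 else 1))"
proof (cases "\<sigma> (i-1) < \<sigma> i")
  case True
  then show ?thesis using D1[OF assms(1,2) True, of a] by (simp add: sS_def sA_def)
next
  case False
  have "inj \<sigma>" by (rule permutes_inj[OF assms(3)])
  then have "\<sigma> (i-1) \<noteq> \<sigma> i" using assms(1) by (simp add: inj_eq)
  with False have lt: "sS i \<sigma> (i-1) < sS i \<sigma> i" by (simp add: sS_def)
  have e1: "sS i \<sigma> \<circ> transpose (i-1) i = \<sigma>" by (simp add: sS_def fun_eq_iff)
  have e2: "(\<lambda>j. sA i a (transpose (i-1) i j)) = a" by (simp add: sA_def)
  have "F n \<sigma> a = F n (sS i \<sigma>) (sA i a) + (if sA i a i = 1 then 1 else -1)"
    using D1[OF assms(1,2) lt, of "sA i a"] unfolding e1 e2 .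
  moreover have "sA i a i = a (i-1)" by (simp add: sA_def)
  ultimately show ?thesis using False by (cases "a (i-1) = 1") simp_all
qed

lemma t_F:
  assumes "2 \<le> n" "\<sigma> permutes {1..n}" "e > 0"
  shows "F n (tS \<sigma>) (tA e k a) = F n \<sigma> a + (if \<sigma> 1 < \<sigma> 2 then (if a 2 = 1 then 1 else -1)
           else (if a 1 = inverse (zeta e ^ k) then -1 else 1))"
proof (cases "\<sigma> 1 < \<sigma> 2")
  case True
  then show ?thesis using D2[OF assms(2,1) True, of e k a] by (simp add: tS_def tA_def)
next
  case False
  have "inj \<sigma>" by (rule permutes_inj[OF assms(2)])
  then have "\<sigma> 1 \<noteq> \<sigma> 2" by (simp add: inj_eq)
  with False have lt: "tS \<sigma> 1 < tS \<sigma> 2" by (simp add: tS_def)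
  have p: "tS \<sigma> permutes {1..n}" unfolding tS_def using assms by (intro permutes_compose permutes_swap_id) auto
  have e1: "tS \<sigma> \<circ> transpose 1 2 = \<sigma>" by (simp add: tS_def fun_eq_iff)
  have e2: "(\<lambda>j. td e k j * tA e k a (transpose 1 2 j)) = a" using tA_inv[of e k a] by (simp add: tA_def)
  have "F n \<sigma> a = F n (tS \<sigma>) (tA e k a) + (if tA e k a 2 = 1 then 1 else -1)"
    using D2[OF p assms(1) lt, of e k "tA e k a"] unfolding e1 e2 .
  moreover have "(zeta e ^ k * a 1 = 1) = (a 1 = inverse (zeta e ^ k))"
    by (metis mult.commute zeta_nz power_not_zero inverse_unique inverse_inverse_eq right_inverse)
  moreover have "tA e k a 2 = zeta e ^ k * a 1" by (simp add: tA_def td_def)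
  ultimately show ?thesis using False by (cases "a 1 = inverse (zeta e ^ k)") simp_all
qed



lemma gens_cases: "x \<in> gens e n \<Longrightarrow> (\<exists>k<e. x = tgen e n k) \<or> (\<exists>j. 3 \<le> j \<and> j \<le> n \<and> x = sgen n j)"
  by (auto simp: gens_def)

lemma good_perm: "good e n \<sigma> a \<Longrightarrow> \<sigma> permutes {1..n}" by (simp add: good_def)

lemma step:
  assumes "2 \<le> e" "2 \<le> n" "good e n \<sigma> a" "x \<in> gens e n"
  shows "\<exists>\<sigma>' a'. mmult n x (mat n \<sigma> a) = mat n \<sigma>' a' \<and> good e n \<sigma>' a' \<and> F n \<sigma>' a' \<le> F n \<sigma> a + 1"
  using gens_cases[OF assms(4)]
proof
  assume "\<exists>k<e. x = tgen e n k"
  then obtain k where k: "k < e" "x = tgen e n k" by blast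
  show ?thesis
    using t_mult[OF assms(2) good_perm[OF assms(3)], of e k a] t_good[OF assms(2,3), of k]
      t_F[OF assms(2) good_perm[OF assms(3)], of e k a] k assms(1)
    by (intro exI[of _ "tS \<sigma>"] exI[of _ "tA e k a"]) auto
next
  assume "\<exists>j. 3 \<le> j \<and> j \<le> n \<and> x = sgen n j"
  then obtain j where j: "3 \<le> j" "j \<le> n" "x = sgen n j" by blast
  show ?thesis
    using s_mult[OF j(1,2) good_perm[OF assms(3)], of a] s_good[OF j(1,2) assms(3)]
      s_F[OF j(1,2) good_perm[OF assms(3)], of a] j
    by (intro exI[of _ "sS j \<sigma>"] exI[of _ "sA j a"]) auto
qed

lemma F_id: "F n id (\<lambda>_. 1) = 0"
proof -
  have "T n id (\<lambda>_. 1) r = 0" for r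
  proof -
    have "{j\<in>{r<..n}. id j < id r} = {}" by auto
    then show ?thesis by (simp add: T_def)
  qed
  then show ?thesis by (simp add: F_def)
qed

lemma good_id: "good e n id (\<lambda>_. 1)" by (simp add: good_def)

lemma lower:
  assumes "2 \<le> e" "2 \<le> n"
  shows "set ws \<subseteq> gens e n \<Longrightarrow> \<exists>\<sigma> a. wprod n ws = mat n \<sigma> a \<and> good e n \<sigma> a \<and> F n \<sigma> a \<le> int (length ws)"
proof (induction ws)
  case Nil
  have "wprod n [] = mat n id (\<lambda>_. 1)" by (simp add: wprod_def idmat_mat)
  moreover have "F n id (\<lambda>_. 1) \<le> int (length ([]::cmat list))" using F_id by simp
  ultimately show ?case using good_id by blast
next
  case (Cons x ws)
  then obtain \<sigma> a where h: "wprod n ws = mat n \<sigma> a" "good e n \<sigma> a" "F n \<sigma> a \<le> int (length ws)" by auto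
  obtain \<sigma>' a' where h2: "mmult n x (mat n \<sigma> a) = mat n \<sigma>' a'" "good e n \<sigma>' a'" "F n \<sigma>' a' \<le> F n \<sigma> a + 1"
    using step[OF assms h(2), of x] Cons.prems by auto
  have "wprod n (x # ws) = mmult n x (wprod n ws)" by (simp add: wprod_def)
  then show ?case using h h2 by (intro exI[of _ \<sigma>'] exI[of _ a']) auto
qed

lemma F_nonneg: "\<sigma> permutes {1..n} \<Longrightarrow> F n \<sigma> a \<ge> 0"
  unfolding F_def
proof (rule sum_nonneg)
  fix r assume "\<sigma> permutes {1..n}" "r \<in> {1..n}"
  then have "\<sigma> r \<ge> 1" using perm_range by fastforce
  then show "0 \<le> T n \<sigma> a r" by (simp add: T_def)
qed

lemma mat_inj:
  assumes "good e n \<sigma> a" "good e n \<sigma>' a'" "e > 0" "mat n \<sigma> a = mat n \<sigma>' a'" "i \<in> {1..n}"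
  shows "\<sigma> i = \<sigma>' i \<and> a i = a' i"
proof -
  have "a i ^ e = 1" using assms(1,5) by (simp add: good_def)
  then have nz: "a i \<noteq> 0" using assms(3) by (auto simp: power_0_left)
  have "mat n \<sigma> a i (\<sigma> i) = mat n \<sigma>' a' i (\<sigma> i)" using assms(4) by simp
  then have "a i = (if \<sigma> i = \<sigma>' i then a' i else 0)" using assms(5) by (simp add: mat_def)
  with nz show ?thesis by (auto split: if_splits)
qed

lemma F_cong:
  assumes "\<forall>i\<in>{1..n}. \<sigma> i = \<sigma>' i \<and> a i = a' i"
  shows "F n \<sigma> a = F n \<sigma>' a'"
  unfolding F_def
proof (rule sum.cong[OF refl])
  fix r assume r: "r \<in> {1..n}"
  have "{j\<in>{r<..n}. \<sigma> j < \<sigma> r} = {j\<in>{r<..n}. \<sigma>' j < \<sigma>' r}" using assms r by auto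
  moreover have "{j\<in>{1..<r}. \<sigma> j < \<sigma> r} = {j\<in>{1..<r}. \<sigma>' j < \<sigma>' r}" using assms r by auto
  moreover have "\<sigma> r = \<sigma>' r" "a r = a' r" using assms r by auto
  ultimately show "T n \<sigma> a r = T n \<sigma>' a' r" unfolding T_def by simp
qed

lemma identity:
  assumes "\<forall>i\<in>{1..n}. \<sigma> i = i \<and> a i = 1"
  shows "mat n \<sigma> a = idmat n \<and> F n \<sigma> a = 0"
proof
  show "mat n \<sigma> a = idmat n" using assms by (auto simp: mat_def idmat_def fun_eq_iff)
  show "F n \<sigma> a = 0" using F_cong[of n \<sigma> id a "\<lambda>_. 1"] assms F_id by simp
qed

lemma incr_id:
  fixes \<sigma> :: "nat \<Rightarrow> nat" and n :: nat
  assumes p: "\<sigma> permutes {1..n}" and inc: "\<forall>i. 2 \<le> i \<longrightarrow> i \<le> n \<longrightarrow> \<sigma> (i-1) < \<sigma> i"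
  shows "\<forall>i\<in>{1..n}. \<sigma> i = i"
proof -
  have rng: "\<sigma> i \<in> {1..n}" if "i \<in> {1..n}" for i using perm_range[OF p] that by blast
  have ge: "1 + m \<le> n \<longrightarrow> 1 + m \<le> \<sigma> (1 + m)" for m :: nat
  proof (induction m)
    case 0 then show ?case using rng[of 1] by auto
  next
    case (Suc m)
    then show ?case using inc[rule_format, of "2 + m"] by auto
  qed
  have aux: "\<And>x y k::nat. x < y \<Longrightarrow> y \<le> k \<Longrightarrow> x \<le> k - 1" by arith
  have le: "d < n \<longrightarrow> \<sigma> (n - d) \<le> n - d" for d :: nat
  proof (induction d)
    case 0 then show ?case using rng[of n] by auto
  next
    case (Suc d)
    show ?case
    proof
      assume h: "Suc d < n"
      then have "2 \<le> n - d" by arith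
      then have "\<sigma> (n - d - 1) < \<sigma> (n - d)" using h inc by auto
      moreover have "\<sigma> (n - d) \<le> n - d" using Suc.IH h by auto
      ultimately have "\<sigma> (n - d - 1) \<le> n - d - 1" by (meson aux)
      moreover have "n - Suc d = n - d - 1" by (simp only: diff_diff_left)
      ultimately show "\<sigma> (n - Suc d) \<le> n - Suc d" by metis
    qed
  qed
  show ?thesis
  proof
    fix i assume i: "i \<in> {1..n}"
    have "i \<le> \<sigma> i" using ge[of "i - 1"] i by auto
    moreover have "\<sigma> i \<le> i" using le[of "n - i"] i by auto
    ultimately show "\<sigma> i = i" by simp
  qed
qed



lemma descent:
  assumes e: "2 \<le> e" and n: "2 \<le> n" and g: "good e n \<sigma> a"
    and nid: "\<not> (\<forall>i\<in>{1..n}. \<sigma> i = i \<and> a i = 1)"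
  shows "\<exists>x\<in>gens e n. \<exists>\<sigma>' a'. mmult n x (mat n \<sigma> a) = mat n \<sigma>' a' \<and> good e n \<sigma>' a'
           \<and> F n \<sigma>' a' = F n \<sigma> a - 1 \<and> mmult n x (mat n \<sigma>' a') = mat n \<sigma> a"
proof -
  have p: "\<sigma> permutes {1..n}" using g by (simp add: good_def)
  have inj: "inj \<sigma>" by (rule permutes_inj[OF p])
  have e0: "e > 0" using e by simp
  have tcase: "\<exists>x\<in>gens e n. \<exists>\<sigma>' a'. mmult n x (mat n \<sigma> a) = mat n \<sigma>' a' \<and> good e n \<sigma>' a'
           \<and> F n \<sigma>' a' = F n \<sigma> a - 1 \<and> mmult n x (mat n \<sigma>' a') = mat n \<sigma> a"
    if k: "k < e" and dec: "F n (tS \<sigma>) (tA e k a) = F n \<sigma> a - 1" for k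
  proof -
    have g': "good e n (tS \<sigma>) (tA e k a)" by (rule t_good[OF n g e0])
    have "tgen e n k \<in> gens e n" using k by (auto simp: gens_def)
    moreover have "mmult n (tgen e n k) (mat n \<sigma> a) = mat n (tS \<sigma>) (tA e k a)" by (rule t_mult[OF n p])
    moreover have "mmult n (tgen e n k) (mat n (tS \<sigma>) (tA e k a)) = mat n \<sigma> a"
      using t_mult[OF n good_perm[OF g'], of e k "tA e k a"] by simp
    ultimately show ?thesis using g' dec by blast
  qed
  have scase: "\<exists>x\<in>gens e n. \<exists>\<sigma>' a'. mmult n x (mat n \<sigma> a) = mat n \<sigma>' a' \<and> good e n \<sigma>' a'
           \<and> F n \<sigma>' a' = F n \<sigma> a - 1 \<and> mmult n x (mat n \<sigma>' a') = mat n \<sigma> a"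
    if i: "3 \<le> i" "i \<le> n" and dec: "F n (sS i \<sigma>) (sA i a) = F n \<sigma> a - 1" for i
  proof -
    have g': "good e n (sS i \<sigma>) (sA i a)" by (rule s_good[OF i g])
    have "sgen n i \<in> gens e n" using i by (auto simp: gens_def)
    moreover have "mmult n (sgen n i) (mat n \<sigma> a) = mat n (sS i \<sigma>) (sA i a)" by (rule s_mult[OF i p])
    moreover have "mmult n (sgen n i) (mat n (sS i \<sigma>) (sA i a)) = mat n \<sigma> a"
      using s_mult[OF i good_perm[OF g'], of "sA i a"] by simp
    ultimately show ?thesis using g' dec by blast
  qed
  show ?thesis
  proof (cases "\<sigma> 1 < \<sigma> 2")
    case False
    have "a 1 ^ e = 1" using g n by (simp add: good_def)
    then obtain k where k: "k < e" "a 1 = inverse (zeta e ^ k)" using root_ex[OF e0] by blast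
    show ?thesis using tcase[OF k(1)] t_F[OF n p e0, of k a] False k(2) by simp
  next
    case lt12: True
    show ?thesis
    proof (cases "a 2 = 1")
      case False
      show ?thesis using tcase[of 0] t_F[OF n p e0, of 0 a] False lt12 e0 by simp
    next
      case a2: True
      show ?thesis
      proof (cases "\<exists>i. 3 \<le> i \<and> i \<le> n \<and> ((\<sigma> (i-1) < \<sigma> i \<and> a i \<noteq> 1) \<or> (\<sigma> (i-1) > \<sigma> i \<and> a (i-1) = 1))")
        case True
        then obtain i where i: "3 \<le> i" "i \<le> n" "(\<sigma> (i-1) < \<sigma> i \<and> a i \<noteq> 1) \<or> (\<sigma> (i-1) > \<sigma> i \<and> a (i-1) = 1)"
          by blast
        show ?thesis using scase[OF i(1,2)] s_F[OF i(1,2) p, of a] i(3) by auto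
      next
        case False
        have P: "m + 2 \<le> n \<longrightarrow> \<sigma> (m+1) < \<sigma> (m+2) \<and> a (m+2) = 1" for m
        proof (induction m)
          case 0 then show ?case using lt12 a2 by (simp add: numeral_2_eq_2)
        next
          case (Suc m)
          show ?case
          proof
            assume h: "Suc m + 2 \<le> n"
            have a1: "a (m+2) = 1" using Suc.IH h by simp
            have ne: "\<sigma> (m+2) \<noteq> \<sigma> (m+3)" using inj by (simp add: inj_eq)
            have F3: "\<not> ((\<sigma> (m+2) < \<sigma> (m+3) \<and> a (m+3) \<noteq> 1) \<or> (\<sigma> (m+2) > \<sigma> (m+3) \<and> a (m+2) = 1))"
              using False h spec[OF False[unfolded not_ex], of "m+3"] by simp
            then show "\<sigma> (Suc m + 1) < \<sigma> (Suc m + 2) \<and> a (Suc m + 2) = 1"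
              using a1 ne by (simp add: numeral_3_eq_3)
          qed
        qed
        have inc: "\<forall>i. 2 \<le> i \<longrightarrow> i \<le> n \<longrightarrow> \<sigma> (i-1) < \<sigma> i"
        proof (intro allI impI)
          fix i :: nat assume "2 \<le> i" "i \<le> n"
          then show "\<sigma> (i-1) < \<sigma> i" using P[of "i-2"] by (simp add: numeral_2_eq_2 Suc_diff_Suc)
        qed
        have sid: "\<forall>i\<in>{1..n}. \<sigma> i = i" by (rule incr_id[OF p inc])
        have a_rest: "\<forall>i\<in>{2..n}. a i = 1"
        proof
          fix i assume "i \<in> {2..n}"
          then show "a i = 1" using P[of "i-2"] by (simp add: numeral_2_eq_2 Suc_diff_Suc)
        qed
        have "{1..n} = insert 1 {2..n}" using n by auto
        then have "(\<Prod>i\<in>{1..n}. a i) = a 1 * (\<Prod>i\<in>{2..n}. a i)" by simp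
        also have "(\<Prod>i\<in>{2..n}. a i) = 1" using a_rest by simp
        finally have "a 1 = 1" using g by (simp add: good_def)
        have "\<forall>i\<in>{1..n}. \<sigma> i = i \<and> a i = 1"
        proof
          fix i assume i: "i \<in> {1..n}"
          show "\<sigma> i = i \<and> a i = 1"
          proof (cases "i = 1")
            case True then show ?thesis using sid i \<open>a 1 = 1\<close> by simp
          next
            case False then have "i \<in> {2..n}" using i by auto
            then show ?thesis using sid i a_rest by blast
          qed
        qed
        with nid show ?thesis by blast
      qed
    qed
  qed
qed



lemma upper:
  assumes e: "2 \<le> e" and n: "2 \<le> n"
  shows "good e n \<sigma> a \<Longrightarrow> F n \<sigma> a = int m \<Longrightarrow>
    \<exists>ws. length ws = m \<and> set ws \<subseteq> gens e n \<and> wprod n ws = mat n \<sigma> a"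
proof (induction m arbitrary: \<sigma> a)
  case 0
  show ?case
  proof (cases "\<forall>i\<in>{1..n}. \<sigma> i = i \<and> a i = 1")
    case True
    then show ?thesis using identity[OF True] by (intro exI[of _ "[]"]) (simp add: wprod_def)
  next
    case False
    then obtain x \<sigma>' a' where "good e n \<sigma>' a'" "F n \<sigma>' a' = F n \<sigma> a - 1"
      using descent[OF e n 0(1) False] by blast
    moreover have "F n \<sigma>' a' \<ge> 0" using F_nonneg good_perm calculation(1) by blast
    ultimately show ?thesis using 0(2) by simp
  qed
next
  case (Suc m)
  show ?case
  proof (cases "\<forall>i\<in>{1..n}. \<sigma> i = i \<and> a i = 1")
    case True
    then show ?thesis using identity[OF True] Suc.prems by simp
  next
    case False
    then obtain x \<sigma>' a' where x: "x \<in> gens e n" "good e n \<sigma>' a'" "F n \<sigma>' a' = F n \<sigma> a - 1"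
      "mmult n x (mat n \<sigma>' a') = mat n \<sigma> a"
      using descent[OF e n Suc.prems(1) False] by blast
    then have "F n \<sigma>' a' = int m" using Suc.prems(2) by simp
    then obtain ws where ws: "length ws = m" "set ws \<subseteq> gens e n" "wprod n ws = mat n \<sigma>' a'"
      using Suc.IH[OF x(2)] by blast
    have "wprod n (x # ws) = mmult n x (wprod n ws)" by (simp add: wprod_def)
    then show ?thesis using ws x by (intro exI[of _ "x # ws"]) auto
  qed
qed

lemma wlen_F:
  assumes e: "2 \<le> e" and n: "2 \<le> n" and g: "good e n \<sigma> a"
  shows "int (wlen e n (mat n \<sigma> a)) = F n \<sigma> a"
proof -
  have F0: "F n \<sigma> a \<ge> 0" using F_nonneg[OF good_perm[OF g]] .
  define m where "m = nat (F n \<sigma> a)"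
  have Fm: "F n \<sigma> a = int m" using F0 m_def by simp
  obtain ws where ws: "length ws = m" "set ws \<subseteq> gens e n" "wprod n ws = mat n \<sigma> a"
    using upper[OF e n g Fm] by blast
  have "wlen e n (mat n \<sigma> a) = m"
    unfolding wlen_def
  proof (rule Least_equality)
    show "\<exists>ws. length ws = m \<and> set ws \<subseteq> gens e n \<and> wprod n ws = mat n \<sigma> a" using ws by blast
  next
    fix m' assume "\<exists>ws. length ws = m' \<and> set ws \<subseteq> gens e n \<and> wprod n ws = mat n \<sigma> a"
    then obtain ws' where ws': "length ws' = m'" "set ws' \<subseteq> gens e n" "wprod n ws' = mat n \<sigma> a" by blast
    obtain \<sigma>' a' where h: "wprod n ws' = mat n \<sigma>' a'" "good e n \<sigma>' a'" "F n \<sigma>' a' \<le> int (length ws')"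
      using lower[OF e n ws'(2)] by blast
    have "\<forall>i\<in>{1..n}. \<sigma> i = \<sigma>' i \<and> a i = a' i"
      using mat_inj[OF g h(2)] e ws'(3) h(1) by auto
    then have "F n \<sigma> a = F n \<sigma>' a'" by (rule F_cong)
    then show "m \<le> m'" using h(3) ws'(1) Fm by simp
  qed
  then show ?thesis using Fm by simp
qed

theorem mainTheorem3:
  fixes e n :: nat and w :: cmat and c :: "nat \<Rightarrow> nat" and a :: "nat \<Rightarrow> complex"
  assumes "e \<ge> 2" and "n \<ge> 2"
    and "w \<in> Geen e n"
    and "\<forall>i\<in>{1..n}. c i \<in> {1..n} \<and> w i (c i) \<noteq> 0"
    and "\<forall>i\<in>{1..n}. a i = w i (c i)"
  shows "(n \<ge> 3 \<longrightarrow> (\<forall>i\<in>{3..n}.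
            (c (i - 1) < c i \<longrightarrow>
               (int (wlen e n (mmult n (sgen n i) w)) = int (wlen e n w) - 1 \<longleftrightarrow> a i \<noteq> 1)) \<and>
            (c (i - 1) > c i \<longrightarrow>
               (int (wlen e n (mmult n (sgen n i) w)) = int (wlen e n w) - 1 \<longleftrightarrow> a (i - 1) = 1))))
       \<and> (c 1 < c 2 \<longrightarrow> (\<forall>k<e.
            int (wlen e n (mmult n (tgen e n k) w)) = int (wlen e n w) - 1 \<longleftrightarrow> a 2 \<noteq> 1))
       \<and> (c 1 > c 2 \<longrightarrow> (\<forall>k<e.
            int (wlen e n (mmult n (tgen e n k) w)) = int (wlen e n w) - 1 \<longleftrightarrow> a 1 = inverse (zeta e ^ k)))"
proof -
  obtain \<sigma> b where w: "w = mat n \<sigma> b" and g: "good e n \<sigma> b" using Geen_eq[OF assms(3)] by blast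
  have p: "\<sigma> permutes {1..n}" using g by (simp add: good_def)
  have e0: "e > 0" using assms(1) by simp
  have cb: "c i = \<sigma> i \<and> a i = b i" if "i \<in> {1..n}" for i
  proof -
    have "w i (c i) \<noteq> 0" using assms(4) that by blast
    then have "c i = \<sigma> i" using that by (simp add: w mat_def split: if_splits)
    then show ?thesis using assms(5) that by (simp add: w mat_def)
  qed
  have Lw: "int (wlen e n w) = F n \<sigma> b" using wlen_F[OF assms(1,2) g] w by simp
  have part1: "(c (i - 1) < c i \<longrightarrow>
               (int (wlen e n (mmult n (sgen n i) w)) = int (wlen e n w) - 1 \<longleftrightarrow> a i \<noteq> 1)) \<and>
            (c (i - 1) > c i \<longrightarrow>
               (int (wlen e n (mmult n (sgen n i) w)) = int (wlen e n w) - 1 \<longleftrightarrow> a (i - 1) = 1))"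
    if i: "i \<in> {3..n}" for i
  proof -
    have i3: "3 \<le> i" "i \<le> n" using i by auto
    have "int (wlen e n (mmult n (sgen n i) w)) = F n (sS i \<sigma>) (sA i b)"
      using s_mult[OF i3 p, of b] wlen_F[OF assms(1,2) s_good[OF i3 g]] w by simp
    also have "\<dots> = F n \<sigma> b + (if \<sigma> (i-1) < \<sigma> i then (if b i = 1 then 1 else -1)
           else (if b (i-1) = 1 then -1 else 1))" by (rule s_F[OF i3 p])
    finally have L: "int (wlen e n (mmult n (sgen n i) w)) = int (wlen e n w) + (if \<sigma> (i-1) < \<sigma> i then (if b i = 1 then 1 else -1)
           else (if b (i-1) = 1 then -1 else 1))" using Lw by simp
    have c1: "c (i-1) = \<sigma> (i-1)" "a (i-1) = b (i-1)" proof -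
      have "i - 1 \<in> {1..n}" using i3 by auto
      then show "c (i-1) = \<sigma> (i-1)" "a (i-1) = b (i-1)" using cb by blast+
    qed
    have c2: "c i = \<sigma> i" "a i = b i" using cb[of i] i3 by auto
    show ?thesis unfolding L c1 c2 by auto
  qed
  have part2: "(c 1 < c 2 \<longrightarrow> (int (wlen e n (mmult n (tgen e n k) w)) = int (wlen e n w) - 1 \<longleftrightarrow> a 2 \<noteq> 1))
       \<and> (c 1 > c 2 \<longrightarrow> (int (wlen e n (mmult n (tgen e n k) w)) = int (wlen e n w) - 1 \<longleftrightarrow> a 1 = inverse (zeta e ^ k)))"
    if k: "k < e" for k
  proof -
    have "int (wlen e n (mmult n (tgen e n k) w)) = F n (tS \<sigma>) (tA e k b)"
      using t_mult[OF assms(2) p, of e k b] wlen_F[OF assms(1,2) t_good[OF assms(2) g e0]] w by simp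
    also have "\<dots> = F n \<sigma> b + (if \<sigma> 1 < \<sigma> 2 then (if b 2 = 1 then 1 else -1)
           else (if b 1 = inverse (zeta e ^ k) then -1 else 1))" by (rule t_F[OF assms(2) p e0])
    finally have L: "int (wlen e n (mmult n (tgen e n k) w)) = int (wlen e n w) + (if \<sigma> 1 < \<sigma> 2 then (if b 2 = 1 then 1 else -1)
           else (if b 1 = inverse (zeta e ^ k) then -1 else 1))" using Lw by simp
    have c1: "c 1 = \<sigma> 1" "a 1 = b 1" using cb[of 1] assms(2) by auto
    have c2: "c 2 = \<sigma> 2" "a 2 = b 2" using cb[of 2] assms(2) by auto
    show ?thesis unfolding L c1 c2 by auto
  qed
  show ?thesis using part1 part2 by blast
qed


end
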